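(* Let $\mathfrak{h}$ be a separable complex Hilbert space, $C$ a self-adjoint positive operator in $\mathfrak{h}$, and $(G(t))_{t\ge0}$, $(L_\ell(t))_{t\ge0}$ ($\ell\in\mathbb{N}$) linear operators in $\mathfrak{h}$ with $\mathcal{D}(C)\subset\mathcal{D}(G(t))\cap\mathcal{D}(L_\ell(t))$, such that: (H2.1) $\|G(t)x\|^2\le K(t)\|x\|_C^2$ for all $t\ge0$, $x\in\mathcal{D}(C)$, with $K$ non-decreasing non-negative; (H2.2) for each $\ell$ there is a non-decreasing function $K_\ell$ with $\|L_\ell(t)x\|^2\le K_\ell(t)\|x\|_C^2$ for all $x\in\mathcal{D}(C)$, $t\ge0$; (H2.3) there exist a non-decreasing non-negative function $\alpha$ and a core $\mathfrak{D}_1$ of $C^2$ with $2\Re\langle C^2x,G(t)x\rangle+\sum_{\ell=1}^\infty\|CL_\ell(t)x\|^2\le\alpha(t)\|x\|_C^2$ for all $t\ge0$, $x\in\mathfrak{D}_1$. Then for every $x\in\mathcal{D}(C^2)$ and $t\ge0$: $L_\ell(t)x\in\mathcal{D}(C)$ for all $\ell\in\mathbb{N}$, and $2\Re\langle C^2x,G(t)x\rangle+\sum_{\ell=1}^\infty\|CL_\ell(t)x\|^2\le\alpha(t)\|x\|_C^2$.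
   Context: $\|x\|_C^2=\|x\|^2+\|Cx\|^2$ for $x\in\mathcal{D}(C)$. *)

theory Defs
  imports "HOL-Analysis.Analysis"
begin

text \<open>A complex Hilbert space, presented as a real Hilbert space (real_inner, complete)
  together with a complex scalar multiplication compatible with the real structure.
  The real inner product is the real part of the complex inner product.\<close>

class complex_hilbert = real_inner + complete_space +
  fixes scaleC :: "complex \<Rightarrow> 'a \<Rightarrow> 'a"
  assumes scaleC_add_right: "scaleC a (x + y) = scaleC a x + scaleC a y"
    and scaleC_add_left: "scaleC (a + b) x = scaleC a x + scaleC b x"
    and scaleC_scaleC: "scaleC a (scaleC b x) = scaleC (a * b) x"
    and scaleC_one: "scaleC 1 x = x"
    and scaleC_of_real: "scaleC (complex_of_real r) x = scaleR r x"
    and inner_scaleC_ii: "inner (scaleC \<i> x) (scaleC \<i> y) = inner x y"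

text \<open>Complex inner product, antilinear in the first, linear in the second argument.\<close>
definition cinner :: "'a::complex_hilbert \<Rightarrow> 'a \<Rightarrow> complex" where
  "cinner x y = Complex (inner x y) (- inner x (scaleC \<i> y))"

definition csubspace :: "'a::complex_hilbert set \<Rightarrow> bool" where
  "csubspace S \<longleftrightarrow> 0 \<in> S \<and> (\<forall>x\<in>S. \<forall>y\<in>S. x + y \<in> S) \<and> (\<forall>c. \<forall>x\<in>S. scaleC c x \<in> S)"

text \<open>A (possibly unbounded) linear operator with domain D, represented by a function f
  whose values outside D are irrelevant.\<close>
definition clinear_op :: "'a::complex_hilbert set \<Rightarrow> ('a \<Rightarrow> 'a) \<Rightarrow> bool" where
  "clinear_op D f \<longleftrightarrow> csubspace D \<and> (\<forall>x\<in>D. \<forall>y\<in>D. f (x + y) = f x + f y)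
     \<and> (\<forall>c. \<forall>x\<in>D. f (scaleC c x) = scaleC c (f x))"

text \<open>Self-adjoint: densely defined, domain of the adjoint equals D, and the adjoint agrees with f.\<close>
definition self_adjoint_op :: "'a::complex_hilbert set \<Rightarrow> ('a \<Rightarrow> 'a) \<Rightarrow> bool" where
  "self_adjoint_op D f \<longleftrightarrow> clinear_op D f \<and> closure D = UNIV
     \<and> (\<forall>y. (\<exists>z. \<forall>x\<in>D. cinner (f x) y = cinner x z) \<longleftrightarrow> y \<in> D)
     \<and> (\<forall>x\<in>D. \<forall>y\<in>D. cinner (f x) y = cinner x (f y))"

definition positive_op :: "'a::complex_hilbert set \<Rightarrow> ('a \<Rightarrow> 'a) \<Rightarrow> bool" where
  "positive_op D f \<longleftrightarrow> (\<forall>x\<in>D. 0 \<le> Re (cinner x (f x)))"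

definition dom_sq :: "'a set \<Rightarrow> ('a \<Rightarrow> 'a) \<Rightarrow> 'a set" where
  "dom_sq D f = {x \<in> D. f x \<in> D}"

definition is_core_sq :: "'a::complex_hilbert set \<Rightarrow> ('a \<Rightarrow> 'a) \<Rightarrow> 'a set \<Rightarrow> bool" where
  "is_core_sq D f D1 \<longleftrightarrow> csubspace D1 \<and> D1 \<subseteq> dom_sq D f \<and>
     (\<forall>x\<in>dom_sq D f. \<exists>s. (\<forall>n. s n \<in> D1) \<and> s \<longlonglongrightarrow> x \<and> (\<lambda>n. f (f (s n))) \<longlonglongrightarrow> f (f x))"

definition graph_norm_sq :: "('a::real_normed_vector \<Rightarrow> 'a) \<Rightarrow> 'a \<Rightarrow> real" where
  "graph_norm_sq f x = (norm x)\<^sup>2 + (norm (f x))\<^sup>2"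

end

theory Submission
  imports Defs
begin

lemma re_cinner[simp]: "Re (cinner x y) = inner x y" by (simp add: cinner_def)

lemma scaleC_zero: "scaleC c (0::'a::complex_hilbert) = 0"
  using scaleC_add_right[of c "0::'a" 0] by simp

lemma scaleC_minus: "scaleC c (- (y::'a::complex_hilbert)) = - scaleC c y"
proof -
  have "scaleC c y + scaleC c (-y) = 0" using scaleC_add_right[of c y "-y"] scaleC_zero[of c] by (metis add.right_inverse)
  then show ?thesis by (rule add.inverse_unique[symmetric])
qed

lemma scaleC_diff: "scaleC c ((a::'a::complex_hilbert) - b) = scaleC c a - scaleC c b"
  using scaleC_add_right[of c a "-b"] scaleC_minus[of c b] by simp

lemma scaleC_m1: "scaleC (-1) (x::'a::complex_hilbert) = - x"
  using scaleC_of_real[of "-1" x] by simp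

lemma norm_scaleC_ii: "norm (scaleC \<i> (y::'a::complex_hilbert)) = norm y"
  by (simp add: norm_eq_sqrt_inner inner_scaleC_ii)

lemma tendsto_scaleC_ii:
  assumes "f \<longlonglongrightarrow> (y::'a::complex_hilbert)"
  shows "(\<lambda>n. scaleC \<i> (f n)) \<longlonglongrightarrow> scaleC \<i> y"
proof -
  have "(\<lambda>n. norm (f n - y)) \<longlonglongrightarrow> 0" by (rule tendsto_norm_zero, rule LIM_zero, rule assms)
  moreover have "norm (scaleC \<i> (f n) - scaleC \<i> y) = norm (f n - y)" for n
    by (metis scaleC_diff norm_scaleC_ii)
  ultimately have "(\<lambda>n. norm (scaleC \<i> (f n) - scaleC \<i> y)) \<longlonglongrightarrow> 0" by simp
  then have "(\<lambda>n. scaleC \<i> (f n) - scaleC \<i> y) \<longlonglongrightarrow> 0" by (rule tendsto_norm_zero_cancel)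
  then show ?thesis by (rule LIM_zero_cancel)
qed

lemma clin_diff:
  assumes "clinear_op D f" "x \<in> D" "y \<in> D"
  shows "x - y \<in> D \<and> f (x - y) = f x - f y"
proof -
  have 1: "scaleC (-1) y \<in> D" "f (scaleC (-1) y) = scaleC (-1) (f y)"
    using assms unfolding clinear_op_def csubspace_def by auto
  hence 2: "-y \<in> D" "f (-y) = - f y" by (simp_all add: scaleC_m1)
  have "x + -y \<in> D" "f (x + -y) = f x + f (-y)"
    using assms 2 unfolding clinear_op_def csubspace_def by auto
  then show ?thesis using 2 by simp
qed

lemma cauchy_from_bound:
  fixes X :: "nat \<Rightarrow> 'b::metric_space"
  assumes a: "a \<longlonglongrightarrow> 0" and b: "\<And>m n. dist (X m) (X n) \<le> c * (a m + a n)" and c: "c \<ge> 0"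
  shows "Cauchy X"
proof (rule metric_CauchyI)
  fix e :: real assume e: "0 < e"
  then have "e / (2*c+2) > 0" using c by simp
  with a obtain M where M: "\<And>n. n \<ge> M \<Longrightarrow> norm (a n - 0) < e / (2*c+2)"
    unfolding LIMSEQ_iff by blast
  show "\<exists>M. \<forall>m\<ge>M. \<forall>n\<ge>M. dist (X m) (X n) < e"
  proof (intro exI allI impI)
    fix m n assume mn: "m \<ge> M" "n \<ge> M"
    have am: "\<bar>a m\<bar> < e/(2*c+2)" and an: "\<bar>a n\<bar> < e/(2*c+2)" using M mn by auto
    have "dist (X m) (X n) \<le> c * (a m + a n)" by (rule b)
    also have "\<dots> \<le> c * (2 * (e/(2*c+2)))"
      using am an c by (intro mult_left_mono) auto
    also have "\<dots> < e" using c e by (simp add: field_simps)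
    finally show "dist (X m) (X n) < e" .
  qed
qed

lemma closed_sa:
  assumes sa: "self_adjoint_op D C" and u: "\<And>n. u n \<in> D"
    and uv: "u \<longlonglongrightarrow> (v::'a::complex_hilbert)" and cz: "(\<lambda>n. C (u n)) \<longlonglongrightarrow> z"
  shows "v \<in> D \<and> C v = z"
proof -
  have sym: "\<And>a b. a \<in> D \<Longrightarrow> b \<in> D \<Longrightarrow> cinner (C a) b = cinner a (C b)"
    using sa unfolding self_adjoint_op_def by blast
  have adj: "\<And>y. (\<exists>z. \<forall>x\<in>D. cinner (C x) y = cinner x z) \<longleftrightarrow> y \<in> D"
    using sa unfolding self_adjoint_op_def by blast
  have cl: "closure D = UNIV" using sa unfolding self_adjoint_op_def by blast
  have eq: "cinner (C w) v = cinner w z" if w: "w \<in> D" for w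
  proof -
    have c: "cinner (C w) (u n) = cinner w (C (u n))" for n using sym[OF w u] .
    have r: "inner (C w) (u n) = inner w (C (u n))" for n
      using arg_cong[OF c, of Re] by simp
    have i: "inner (C w) (scaleC \<i> (u n)) = inner w (scaleC \<i> (C (u n)))" for n
      using arg_cong[OF c, of Im] by (simp add: cinner_def)
    have l1: "(\<lambda>n. inner (C w) (u n)) \<longlonglongrightarrow> inner (C w) v"
      by (intro tendsto_intros uv)
    have l2: "(\<lambda>n. inner (C w) (u n)) \<longlonglongrightarrow> inner w z"
      unfolding r by (intro tendsto_intros cz)
    have l3: "(\<lambda>n. inner (C w) (scaleC \<i> (u n))) \<longlonglongrightarrow> inner (C w) (scaleC \<i> v)"
      by (intro tendsto_intros tendsto_scaleC_ii uv)
    have l4: "(\<lambda>n. inner (C w) (scaleC \<i> (u n))) \<longlonglongrightarrow> inner w (scaleC \<i> z)"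
      unfolding i by (intro tendsto_intros tendsto_scaleC_ii cz)
    show ?thesis using LIMSEQ_unique[OF l1 l2] LIMSEQ_unique[OF l3 l4]
      by (simp add: cinner_def)
  qed
  then have vD: "v \<in> D" using adj by blast
  have o: "inner w (z - C v) = 0" if w: "w \<in> D" for w
  proof -
    have "cinner (C w) v = cinner w (C v)" using sym[OF w vD] .
    with eq[OF w] have "cinner w z = cinner w (C v)" by simp
    then have "Re (cinner w z) = Re (cinner w (C v))" by simp
    then have "inner w z = inner w (C v)" by simp
    then show ?thesis by (simp add: inner_diff_right)
  qed
  have "z - C v \<in> closure D" using cl by simp
  then obtain f where f: "\<And>n. f n \<in> D" "f \<longlonglongrightarrow> z - C v" unfolding closure_sequential by blast
  have "(\<lambda>n. inner (f n) (z - C v)) \<longlonglongrightarrow> inner (z - C v) (z - C v)"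
    by (intro tendsto_intros f)
  moreover have "(\<lambda>n. inner (f n) (z - C v)) = (\<lambda>n. 0)" using o f by auto
  ultimately have "inner (z - C v) (z - C v) = 0" using LIMSEQ_unique by fastforce
  then show ?thesis using vD by simp
qed


lemma sq_bound_tendsto:
  fixes u :: "nat \<Rightarrow> 'b::real_normed_vector"
  assumes b: "\<And>n. (norm (u n))\<^sup>2 \<le> c * g n" and g: "g \<longlonglongrightarrow> 0"
  shows "(\<lambda>n. norm (u n)) \<longlonglongrightarrow> 0"
proof -
  have "(\<lambda>n. (norm (u n))\<^sup>2) \<longlonglongrightarrow> 0"
  proof (rule tendsto_sandwich[of "\<lambda>n. 0" _ _ "\<lambda>n. c * g n"])
    show "\<forall>\<^sub>F n in sequentially. 0 \<le> (norm (u n))\<^sup>2" by simp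
    show "\<forall>\<^sub>F n in sequentially. (norm (u n))\<^sup>2 \<le> c * g n" using b by simp
    show "(\<lambda>n. 0) \<longlonglongrightarrow> (0::real)" by simp
    show "(\<lambda>n. c * g n) \<longlonglongrightarrow> 0" using tendsto_mult[OF tendsto_const g, of c] by simp
  qed
  from tendsto_real_sqrt[OF this] show ?thesis by simp
qed

lemma tendsto_from_norm:
  assumes "(\<lambda>n. norm (f n - y)) \<longlonglongrightarrow> 0"
  shows "f \<longlonglongrightarrow> (y::'b::real_normed_vector)"
proof -
  have "(\<lambda>n. f n - y) \<longlonglongrightarrow> 0" using assms by (rule tendsto_norm_zero_cancel)
  then show ?thesis by (rule LIM_zero_cancel)
qed

theorem lemma5p3:
  fixes DC :: "'a::complex_hilbert set" and C :: "'a \<Rightarrow> 'a"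
    and DG :: "real \<Rightarrow> 'a set" and G :: "real \<Rightarrow> 'a \<Rightarrow> 'a"
    and DL :: "nat \<Rightarrow> real \<Rightarrow> 'a set" and L :: "nat \<Rightarrow> real \<Rightarrow> 'a \<Rightarrow> 'a"
    and K \<alpha> :: "real \<Rightarrow> real" and KL :: "nat \<Rightarrow> real \<Rightarrow> real"
    and D1 :: "'a set"
  assumes separable: "\<exists>B::'a set. countable B \<and> closure B = UNIV"
    and C_sa: "self_adjoint_op DC C" and C_pos: "positive_op DC C"
    and G_lin: "\<And>t. t \<ge> 0 \<Longrightarrow> clinear_op (DG t) (G t)"
    and L_lin: "\<And>l t. t \<ge> 0 \<Longrightarrow> clinear_op (DL l t) (L l t)"
    and dom_incl: "\<And>l t. t \<ge> 0 \<Longrightarrow> DC \<subseteq> DG t \<inter> DL l t"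
    and K_mono: "mono_on {0..} K" and K_nonneg: "\<And>t. t \<ge> 0 \<Longrightarrow> K t \<ge> 0"
    and H21: "\<And>t x. t \<ge> 0 \<Longrightarrow> x \<in> DC \<Longrightarrow> (norm (G t x))\<^sup>2 \<le> K t * graph_norm_sq C x"
    and KL_mono: "\<And>l. mono_on {0..} (KL l)"
    and H22: "\<And>l t x. t \<ge> 0 \<Longrightarrow> x \<in> DC \<Longrightarrow> (norm (L l t x))\<^sup>2 \<le> KL l t * graph_norm_sq C x"
    and \<alpha>_mono: "mono_on {0..} \<alpha>" and \<alpha>_nonneg: "\<And>t. t \<ge> 0 \<Longrightarrow> \<alpha> t \<ge> 0"
    and core: "is_core_sq DC C D1"
    and H23: "\<And>t x. t \<ge> 0 \<Longrightarrow> x \<in> D1 \<Longrightarrow>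
        (\<forall>l. L l t x \<in> DC) \<and> summable (\<lambda>l. (norm (C (L l t x)))\<^sup>2) \<and>
        2 * Re (cinner (C (C x)) (G t x)) + (\<Sum>l. (norm (C (L l t x)))\<^sup>2) \<le> \<alpha> t * graph_norm_sq C x"
  shows "\<forall>x\<in>dom_sq DC C. \<forall>t\<ge>0.
        (\<forall>l. L l t x \<in> DC) \<and> summable (\<lambda>l. (norm (C (L l t x)))\<^sup>2) \<and>
        2 * Re (cinner (C (C x)) (G t x)) + (\<Sum>l. (norm (C (L l t x)))\<^sup>2) \<le> \<alpha> t * graph_norm_sq C x"
  proof (intro ballI allI impI)
  fix x and t :: real assume x: "x \<in> dom_sq DC C" and t: "t \<ge> 0"
  have Clin: "clinear_op DC C" using C_sa unfolding self_adjoint_op_def by blast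
  have sym: "\<And>a b. a \<in> DC \<Longrightarrow> b \<in> DC \<Longrightarrow> cinner (C a) b = cinner a (C b)"
    using C_sa unfolding self_adjoint_op_def by blast
  have xD: "x \<in> DC" "C x \<in> DC" using x unfolding dom_sq_def by auto
  have D1sub: "D1 \<subseteq> dom_sq DC C" and D1sp: "csubspace D1" using core unfolding is_core_sq_def by auto
  obtain s where s: "\<And>n. s n \<in> D1" "s \<longlonglongrightarrow> x" "(\<lambda>n. C (C (s n))) \<longlonglongrightarrow> C (C x)"
    using core x unfolding is_core_sq_def by blast
  have sD: "\<And>n. s n \<in> DC" "\<And>n. C (s n) \<in> DC" using s(1) D1sub unfolding dom_sq_def by auto
  have DG: "DC \<subseteq> DG t" and DL: "\<And>l. DC \<subseteq> DL l t" using dom_incl[OF t] by auto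
  have Glin: "clinear_op (DG t) (G t)" using G_lin[OF t] .
  have Llin: "\<And>l. clinear_op (DL l t) (L l t)" using L_lin[OF t] .
  have nC: "(norm (C y))\<^sup>2 = inner y (C (C y))" if y: "y \<in> DC" "C y \<in> DC" for y
  proof -
    have "cinner (C (C y)) y = cinner (C y) (C y)" using sym[OF y(2) y(1)] .
    then have "Re (cinner (C (C y)) y) = Re (cinner (C y) (C y))" by simp
    then have "inner (C (C y)) y = inner (C y) (C y)" by simp
    then show ?thesis by (simp add: power2_norm_eq_inner inner_commute)
  qed
  define e where "e n = s n - x" for n
  have eD: "e n \<in> DC" "C (e n) = C (s n) - C x" for n
    using clin_diff[OF Clin sD(1) xD(1)] e_def by auto
  have CeD: "C (e n) \<in> DC" "C (C (e n)) = C (C (s n)) - C (C x)" for n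
    using clin_diff[OF Clin sD(2) xD(2)] eD(2) by auto
  have Ge: "G t (e n) = G t (s n) - G t x" for n
    using clin_diff[OF Glin, of "s n" x] sD DG xD e_def by auto
  have Le: "L l t (e n) = L l t (s n) - L l t x" for l n
    using clin_diff[OF Llin, of "s n" l x] sD DL xD e_def by auto
  have n1: "(\<lambda>n. norm (e n)) \<longlonglongrightarrow> 0" unfolding e_def
    by (rule tendsto_norm_zero, rule LIM_zero, rule s(2))
  have n3: "(\<lambda>n. norm (C (C (e n)))) \<longlonglongrightarrow> 0" unfolding CeD(2)
    by (rule tendsto_norm_zero, rule LIM_zero, rule s(3))
  have n2: "(\<lambda>n. norm (C (e n))) \<longlonglongrightarrow> 0"
  proof (rule sq_bound_tendsto[of _ 1 "\<lambda>n. norm (e n) * norm (C (C (e n)))"])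
    show "(norm (C (e n)))\<^sup>2 \<le> 1 * (norm (e n) * norm (C (C (e n))))" for n
      using nC[OF eD(1) CeD(1)] norm_cauchy_schwarz by simp
    show "(\<lambda>n. norm (e n) * norm (C (C (e n)))) \<longlonglongrightarrow> 0" using tendsto_mult[OF n1 n3] by simp
  qed
  have gn: "(\<lambda>n. graph_norm_sq C (e n)) \<longlonglongrightarrow> 0" unfolding graph_norm_sq_def
    using tendsto_add[OF tendsto_power[OF n1, of 2] tendsto_power[OF n2, of 2]] by simp
  have nG: "(\<lambda>n. norm (G t (e n))) \<longlonglongrightarrow> 0"
    by (rule sq_bound_tendsto[OF _ gn]) (rule H21[OF t eD(1)])
  have nL: "(\<lambda>n. norm (L l t (e n))) \<longlonglongrightarrow> 0" for l
    by (rule sq_bound_tendsto[OF _ gn]) (rule H22[OF t eD(1)])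
  have Cs: "(\<lambda>n. C (s n)) \<longlonglongrightarrow> C x" using n2 unfolding eD(2) by (rule tendsto_from_norm)
  have Gs: "(\<lambda>n. G t (s n)) \<longlonglongrightarrow> G t x" using nG unfolding Ge by (rule tendsto_from_norm)
  have Ls: "(\<lambda>n. L l t (s n)) \<longlonglongrightarrow> L l t x" for l using nL unfolding Le by (rule tendsto_from_norm)
  define a where "a n = norm (e n) + norm (C (e n)) + norm (C (C (e n))) + norm (G t (e n))" for n
  have a0: "a \<longlonglongrightarrow> 0" unfolding a_def using tendsto_add[OF tendsto_add[OF tendsto_add[OF n1 n2] n3] nG] by simp
  have H23s: "\<And>n l. L l t (s n) \<in> DC" using H23[OF t s(1)] by blast
  have al: "\<alpha> t \<ge> 0" using \<alpha>_nonneg[OF t] .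
  have bound: "norm (C (L l t (s n)) - C (L l t (s m))) \<le> sqrt (2 * \<alpha> t + 2) * (a n + a m)" for l n m
  proof -
    define y where "y = s n - s m"
    have yD1: "y \<in> D1"
    proof -
      have "s n + scaleC (-1) (s m) \<in> D1" using D1sp s(1) unfolding csubspace_def by blast
      then show ?thesis unfolding y_def by (simp add: scaleC_m1)
    qed
    have ye: "y = e n - e m" unfolding y_def e_def by simp
    have yD: "y \<in> DC" "C y = C (e n) - C (e m)" using clin_diff[OF Clin eD(1) eD(1)] ye by auto
    have CyD: "C (C y) = C (C (e n)) - C (C (e m))" using clin_diff[OF Clin CeD(1) CeD(1)] yD by auto
    have Gy: "G t y = G t (e n) - G t (e m)" using clin_diff[OF Glin, of "e n" "e m"] eD DG ye by auto
    have Ly: "L l t y = L l t (s n) - L l t (s m)" using clin_diff[OF Llin, of "s n" l "s m"] sD DL y_def by auto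
    have CLy: "C (L l t y) = C (L l t (s n)) - C (L l t (s m))"
      using clin_diff[OF Clin H23s H23s] Ly by auto
    have h: "summable (\<lambda>l. (norm (C (L l t y)))\<^sup>2)"
       "2 * Re (cinner (C (C y)) (G t y)) + (\<Sum>l. (norm (C (L l t y)))\<^sup>2) \<le> \<alpha> t * graph_norm_sq C y"
      using H23[OF t yD1] by auto
    have t1: "(norm (C (L l t y)))\<^sup>2 \<le> (\<Sum>l. (norm (C (L l t y)))\<^sup>2)"
      using sum_le_suminf[OF h(1), of "{l}"] by simp
    define b where "b = a n + a m"
    have a_nn: "a k \<ge> 0" for k unfolding a_def by simp
    have b0: "b \<ge> 0" unfolding b_def using a_nn by simp
    have nn: "0 \<le> norm (C (e k)) \<and> 0 \<le> norm (C (C (e k))) \<and> 0 \<le> norm (G t (e k)) \<and> 0 \<le> norm (e k)" for k by simp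
    have nb1: "norm y \<le> b" unfolding ye b_def a_def using norm_triangle_ineq4[of "e n" "e m"] nn[of n] nn[of m] by linarith
    have nb2: "norm (C y) \<le> b" unfolding yD(2) b_def a_def using norm_triangle_ineq4[of "C (e n)" "C (e m)"] nn[of n] nn[of m] by linarith
    have nb3: "norm (C (C y)) \<le> b" unfolding CyD b_def a_def using norm_triangle_ineq4[of "C (C (e n))" "C (C (e m))"] nn[of n] nn[of m] by linarith
    have nb4: "norm (G t y) \<le> b" unfolding Gy b_def a_def using norm_triangle_ineq4[of "G t (e n)" "G t (e m)"] nn[of n] nn[of m] by linarith
    have ci: "- inner (C (C y)) (G t y) \<le> norm (C (C y)) * norm (G t y)"
      using norm_cauchy_schwarz[of "- C (C y)" "G t y"] by simp
    have p1: "norm (C (C y)) * norm (G t y) \<le> b * b" using nb3 nb4 b0 by (intro mult_mono) auto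
    have p2: "(norm y)\<^sup>2 \<le> b\<^sup>2" "(norm (C y))\<^sup>2 \<le> b\<^sup>2" using nb1 nb2 by (auto intro: power_mono)
    have "graph_norm_sq C y \<le> 2 * b\<^sup>2" unfolding graph_norm_sq_def using p2 by simp
    then have p3: "\<alpha> t * graph_norm_sq C y \<le> \<alpha> t * (2 * b\<^sup>2)" using al by (rule mult_left_mono)
    have "(norm (C (L l t y)))\<^sup>2 \<le> (2 * \<alpha> t + 2) * b\<^sup>2"
      using t1 h(2) ci p1 p3 by (simp add: power2_eq_square algebra_simps)
    then have "sqrt ((norm (C (L l t y)))\<^sup>2) \<le> sqrt ((2 * \<alpha> t + 2) * b\<^sup>2)" by (rule real_sqrt_le_mono)
    then have "norm (C (L l t y)) \<le> sqrt (2 * \<alpha> t + 2) * b" using b0 by (simp add: real_sqrt_mult)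
    then show ?thesis unfolding CLy b_def .
  qed
  have CLs: "(\<lambda>n. C (L l t (s n))) \<longlonglongrightarrow> C (L l t x) \<and> L l t x \<in> DC" for l
  proof -
    have "Cauchy (\<lambda>n. C (L l t (s n)))"
    proof (rule cauchy_from_bound[OF a0 _ real_sqrt_ge_zero])
      show "dist (C (L l t (s m))) (C (L l t (s n))) \<le> sqrt (2 * \<alpha> t + 2) * (a m + a n)" for m n
        using bound[of l m n] by (simp add: dist_norm)
      show "0 \<le> 2 * \<alpha> t + 2" using al by simp
    qed
    then obtain z where z: "(\<lambda>n. C (L l t (s n))) \<longlonglongrightarrow> z"
      using Cauchy_convergent convergent_def by blast
    have "L l t x \<in> DC \<and> C (L l t x) = z"
      by (rule closed_sa[OF C_sa H23s Ls z])
    then show ?thesis using z by simp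
  qed
  have Rlim: "(\<lambda>n. \<alpha> t * graph_norm_sq C (s n) - 2 * inner (C (C (s n))) (G t (s n)))
      \<longlonglongrightarrow> \<alpha> t * graph_norm_sq C x - 2 * inner (C (C x)) (G t x)"
    unfolding graph_norm_sq_def by (intro tendsto_intros s Cs Gs)
  have bnd: "(\<Sum>l<N. (norm (C (L l t x)))\<^sup>2) \<le> \<alpha> t * graph_norm_sq C x - 2 * inner (C (C x)) (G t x)" for N
  proof (rule LIMSEQ_le[OF _ Rlim])
    show "(\<lambda>n. \<Sum>l<N. (norm (C (L l t (s n))))\<^sup>2) \<longlonglongrightarrow> (\<Sum>l<N. (norm (C (L l t x)))\<^sup>2)"
      using CLs by (intro tendsto_intros) auto
    show "\<exists>M. \<forall>n\<ge>M. (\<Sum>l<N. (norm (C (L l t (s n))))\<^sup>2) \<le>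
        \<alpha> t * graph_norm_sq C (s n) - 2 * inner (C (C (s n))) (G t (s n))"
    proof (intro exI allI impI)
      fix n :: nat
      have h: "summable (\<lambda>l. (norm (C (L l t (s n))))\<^sup>2)"
       "2 * Re (cinner (C (C (s n))) (G t (s n))) + (\<Sum>l. (norm (C (L l t (s n))))\<^sup>2) \<le> \<alpha> t * graph_norm_sq C (s n)"
        using H23[OF t s(1)] by auto
      have "(\<Sum>l<N. (norm (C (L l t (s n))))\<^sup>2) \<le> (\<Sum>l. (norm (C (L l t (s n))))\<^sup>2)"
        using sum_le_suminf[OF h(1), of "{..<N}"] by simp
      then show "(\<Sum>l<N. (norm (C (L l t (s n))))\<^sup>2) \<le>
        \<alpha> t * graph_norm_sq C (s n) - 2 * inner (C (C (s n))) (G t (s n))" using h(2) by simp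
    qed
  qed
  have sm: "summable (\<lambda>l. (norm (C (L l t x)))\<^sup>2)"
    by (rule summableI_nonneg_bounded[OF _ bnd]) simp
  have "(\<Sum>l. (norm (C (L l t x)))\<^sup>2) \<le> \<alpha> t * graph_norm_sq C x - 2 * inner (C (C x)) (G t x)"
    by (rule suminf_le_const[OF sm bnd])
  then show "(\<forall>l. L l t x \<in> DC) \<and> summable (\<lambda>l. (norm (C (L l t x)))\<^sup>2) \<and>
        2 * Re (cinner (C (C x)) (G t x)) + (\<Sum>l. (norm (C (L l t x)))\<^sup>2) \<le> \<alpha> t * graph_norm_sq C x"
    using CLs sm by simp
qed

end
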